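(* For terms $\Gamma\vdash s,t:X$ of the language $\mathbf P$, $s\approx_{\mathbf P}t$ if and only if $[\![s]\!]=[\![t]\!]$ as subprobability kernels $[\![\Gamma]\!]\to D_{\le1}([\![X]\!])$. That is, $\mathrm{FinSubStoch}$ is fully abstract for $\mathbf P$.
   Context: $\mathbf{PSL}$ is the first-order language with types $A::=X\mid\mathsf{unit}\mid A\ast A$ ($X$ ranging over finite sets) and terms $t::=x\mid()\mid(t,t)\mid\pi_i t\mid \underline f(t)\mid\mathrm{let}\ x=t_1\ \mathrm{in}\ t_2$, where $\underline f:A\to B$ ranges over all subprobability kernels between the finite sets interpreting $A,B$ (including scoring and exact conditioning). $\mathbf P$ extends $\mathbf{PSL}$ with $\mathrm{if}\ t_1\ \mathrm{then}\ t_2\ \mathrm{else}\ t_3$ (with $\Gamma\vdash t_1:2$, $\Gamma\vdash t_2,t_3:A$). Types denote finite sets ($[\![\mathsf{unit}]\!]=\{*\}$, $[\![A\ast B]\!]=[\![A]\!]\times[\![B]\!]$) and terms $\Gamma\vdash t:A$ denote subprobability kernels: $[\![x]\!](a|\gamma)=[a=\gamma_x]$; $[\![()]\!]( *|\gamma)=1$; $[\![(s,t)]\!]((a,b)|\gamma)=[\![s]\!](a|\gamma)[\![t]\!](b|\gamma)$; $[\![\pi_1t]\!](a|\gamma)=\sum_b[\![t]\!]((a,b)|\gamma)$ (similarly $\pi_2$); $[\![\underline f(t)]\!](b|\gamma)=\sum_af(b|a)[\![t]\!](a|\gamma)$; $[\![\mathrm{let}\ x=s\ \mathrm{in}\ t]\!](b|\gamma)=\sum_a[\![s]\!](a|\gamma)[\![t]\!](b|\gamma,a)$;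 $[\![\mathrm{if}\ t_1\ \mathrm{then}\ t_2\ \mathrm{else}\ t_3]\!](a|\gamma)=[\![t_2]\!](a|\gamma)[\![t_1]\!](\mathrm{true}|\gamma)+[\![t_3]\!](a|\gamma)[\![t_1]\!](\mathrm{false}|\gamma)$. For a subdistribution $\varphi$, $\mathsf{normalize}(\varphi)=\varphi/Z$ with $Z=\sum_x\varphi(x)$ if $Z\ne0$, and $0$ otherwise. Closed $s,t$ are observationally equivalent, $s\approx t$, if $\mathsf{normalize}([\![s]\!])=\mathsf{normalize}([\![t]\!])$. Open terms are branching equivalent, $s\approx_{\mathbf P}t$, if $C[s]\approx C[t]$ for every closed well-typed $\mathbf P$ context $C[-]$. *)

theory Defs
  imports Complex_Main
begin

text \<open>Base types X range over finite sets; up to bijection these are the sets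
  {0..<n}, so a base type is represented by its cardinality n.\<close>

datatype ty = Base nat | Unit | Prod ty ty

datatype val = VBase nat | VUnit | VPair val val

fun tyset :: "ty \<Rightarrow> val set" where
  "tyset (Base n) = VBase ` {..<n}"
| "tyset Unit = {VUnit}"
| "tyset (Prod A B) = (\<lambda>(a, b). VPair a b) ` (tyset A \<times> tyset B)"

definition bool_ty :: ty where "bool_ty = Base 2"
definition vtrue :: val where "vtrue = VBase 1"
definition vfalse :: val where "vfalse = VBase 0"

text \<open>Subprobability kernels f : A \<rightarrow> B; the number f a b is f(b|a).\<close>
definition subkernel :: "ty \<Rightarrow> ty \<Rightarrow> (val \<Rightarrow> val \<Rightarrow> real) \<Rightarrow> bool" where
  "subkernel A B f \<longleftrightarrow>
     (\<forall>a\<in>tyset A. (\<forall>b\<in>tyset B. 0 \<le> f a b) \<and> (\<Sum>b\<in>tyset B. f a b) \<le> 1)"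

datatype tm =
    Var nat
  | UnitT
  | Pair tm tm
  | Fst ty tm
  | Snd ty tm
  | Prim ty ty "val \<Rightarrow> val \<Rightarrow> real" tm
  | Let ty tm tm       \<comment> \<open>let x : A = s in t ; x is de Bruijn index 0 in t\<close>
  | If tm tm tm

inductive typed :: "ty list \<Rightarrow> tm \<Rightarrow> ty \<Rightarrow> bool" where
  T_Var: "i < length \<Gamma> \<Longrightarrow> typed \<Gamma> (Var i) (\<Gamma> ! i)"
| T_Unit: "typed \<Gamma> UnitT Unit"
| T_Pair: "typed \<Gamma> s A \<Longrightarrow> typed \<Gamma> t B \<Longrightarrow> typed \<Gamma> (Pair s t) (Prod A B)"
| T_Fst: "typed \<Gamma> t (Prod A B) \<Longrightarrow> typed \<Gamma> (Fst B t) A"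
| T_Snd: "typed \<Gamma> t (Prod A B) \<Longrightarrow> typed \<Gamma> (Snd A t) B"
| T_Prim: "subkernel A B f \<Longrightarrow> typed \<Gamma> t A \<Longrightarrow> typed \<Gamma> (Prim A B f t) B"
| T_Let: "typed \<Gamma> s A \<Longrightarrow> typed (A # \<Gamma>) t B \<Longrightarrow> typed \<Gamma> (Let A s t) B"
| T_If: "typed \<Gamma> t1 bool_ty \<Longrightarrow> typed \<Gamma> t2 A \<Longrightarrow> typed \<Gamma> t3 A \<Longrightarrow> typed \<Gamma> (If t1 t2 t3) A"

section \<open>Denotational semantics: den t \<gamma> a = [[t]](a|\<gamma>)\<close>

fun den :: "tm \<Rightarrow> val list \<Rightarrow> val \<Rightarrow> real" where
  "den (Var i) \<gamma> a = (if a = \<gamma> ! i then 1 else 0)"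
| "den UnitT \<gamma> a = (if a = VUnit then 1 else 0)"
| "den (Pair s t) \<gamma> a = (case a of VPair x y \<Rightarrow> den s \<gamma> x * den t \<gamma> y | _ \<Rightarrow> 0)"
| "den (Fst B t) \<gamma> a = (\<Sum>b\<in>tyset B. den t \<gamma> (VPair a b))"
| "den (Snd A t) \<gamma> b = (\<Sum>a\<in>tyset A. den t \<gamma> (VPair a b))"
| "den (Prim A B f t) \<gamma> b = (\<Sum>a\<in>tyset A. f a b * den t \<gamma> a)"
| "den (Let A s t) \<gamma> b = (\<Sum>a\<in>tyset A. den s \<gamma> a * den t (a # \<gamma>) b)"
| "den (If t1 t2 t3) \<gamma> a = den t2 \<gamma> a * den t1 \<gamma> vtrue + den t3 \<gamma> a * den t1 \<gamma> vfalse"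

definition envs :: "ty list \<Rightarrow> val list set" where
  "envs \<Gamma> = {\<gamma>. list_all2 (\<lambda>v A. v \<in> tyset A) \<gamma> \<Gamma>}"

definition normalize_on :: "val set \<Rightarrow> (val \<Rightarrow> real) \<Rightarrow> val \<Rightarrow> real" where
  "normalize_on S \<phi> x = (let Z = (\<Sum>y\<in>S. \<phi> y) in if Z \<noteq> 0 then \<phi> x / Z else 0)"

definition obs_equiv :: "ty \<Rightarrow> tm \<Rightarrow> tm \<Rightarrow> bool" where
  "obs_equiv B s t \<longleftrightarrow>
     (\<forall>b\<in>tyset B. normalize_on (tyset B) (den s []) b = normalize_on (tyset B) (den t []) b)"

datatype ctx =
    Hole
  | CPairL ctx tm
  | CPairR tm ctx
  | CFst ty ctx
  | CSnd ty ctx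
  | CPrim ty ty "val \<Rightarrow> val \<Rightarrow> real" ctx
  | CLetL ty ctx tm
  | CLetR ty tm ctx
  | CIf1 ctx tm tm
  | CIf2 tm ctx tm
  | CIf3 tm tm ctx

fun plug :: "ctx \<Rightarrow> tm \<Rightarrow> tm" where
  "plug Hole u = u"
| "plug (CPairL C t) u = Pair (plug C u) t"
| "plug (CPairR s C) u = Pair s (plug C u)"
| "plug (CFst B C) u = Fst B (plug C u)"
| "plug (CSnd A C) u = Snd A (plug C u)"
| "plug (CPrim A B f C) u = Prim A B f (plug C u)"
| "plug (CLetL A C t) u = Let A (plug C u) t"
| "plug (CLetR A s C) u = Let A s (plug C u)"
| "plug (CIf1 C t2 t3) u = If (plug C u) t2 t3"
| "plug (CIf2 t1 C t3) u = If t1 (plug C u) t3"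
| "plug (CIf3 t1 t2 C) u = If t1 t2 (plug C u)"

text \<open>ctx_typed \<Gamma> A C \<Delta> B: C has a hole of type \<Gamma> \<turnstile> _ : A and \<Delta> \<turnstile> C[_] : B.\<close>
inductive ctx_typed :: "ty list \<Rightarrow> ty \<Rightarrow> ctx \<Rightarrow> ty list \<Rightarrow> ty \<Rightarrow> bool" where
  C_Hole: "ctx_typed \<Gamma> A Hole \<Gamma> A"
| C_PairL: "ctx_typed \<Gamma> A C \<Delta> B1 \<Longrightarrow> typed \<Delta> t B2 \<Longrightarrow> ctx_typed \<Gamma> A (CPairL C t) \<Delta> (Prod B1 B2)"
| C_PairR: "typed \<Delta> s B1 \<Longrightarrow> ctx_typed \<Gamma> A C \<Delta> B2 \<Longrightarrow> ctx_typed \<Gamma> A (CPairR s C) \<Delta> (Prod B1 B2)"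
| C_Fst: "ctx_typed \<Gamma> A C \<Delta> (Prod B1 B2) \<Longrightarrow> ctx_typed \<Gamma> A (CFst B2 C) \<Delta> B1"
| C_Snd: "ctx_typed \<Gamma> A C \<Delta> (Prod B1 B2) \<Longrightarrow> ctx_typed \<Gamma> A (CSnd B1 C) \<Delta> B2"
| C_Prim: "subkernel B1 B2 f \<Longrightarrow> ctx_typed \<Gamma> A C \<Delta> B1 \<Longrightarrow> ctx_typed \<Gamma> A (CPrim B1 B2 f C) \<Delta> B2"
| C_LetL: "ctx_typed \<Gamma> A C \<Delta> B1 \<Longrightarrow> typed (B1 # \<Delta>) t B2 \<Longrightarrow> ctx_typed \<Gamma> A (CLetL B1 C t) \<Delta> B2"
| C_LetR: "typed \<Delta> s B1 \<Longrightarrow> ctx_typed \<Gamma> A C (B1 # \<Delta>) B2 \<Longrightarrow> ctx_typed \<Gamma> A (CLetR B1 s C) \<Delta> B2"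
| C_If1: "ctx_typed \<Gamma> A C \<Delta> bool_ty \<Longrightarrow> typed \<Delta> t2 B \<Longrightarrow> typed \<Delta> t3 B \<Longrightarrow> ctx_typed \<Gamma> A (CIf1 C t2 t3) \<Delta> B"
| C_If2: "typed \<Delta> t1 bool_ty \<Longrightarrow> ctx_typed \<Gamma> A C \<Delta> B \<Longrightarrow> typed \<Delta> t3 B \<Longrightarrow> ctx_typed \<Gamma> A (CIf2 t1 C t3) \<Delta> B"
| C_If3: "typed \<Delta> t1 bool_ty \<Longrightarrow> typed \<Delta> t2 B \<Longrightarrow> ctx_typed \<Gamma> A C \<Delta> B \<Longrightarrow> ctx_typed \<Gamma> A (CIf3 t1 t2 C) \<Delta> B"

definition branch_equiv :: "ty list \<Rightarrow> ty \<Rightarrow> tm \<Rightarrow> tm \<Rightarrow> bool" where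
  "branch_equiv \<Gamma> A s t \<longleftrightarrow>
     (\<forall>C B. ctx_typed \<Gamma> A C [] B \<longrightarrow> obs_equiv B (plug C s) (plug C t))"

end

theory Submission
  imports Defs
begin

lemma finite_tyset[simp]: "finite (tyset A)"
  by (induction A) auto

lemma envs_Cons: "(v # \<delta> \<in> envs (B # \<Delta>)) = (v \<in> tyset B \<and> \<delta> \<in> envs \<Delta>)"
  by (simp add: envs_def)

lemma vtrue_in: "vtrue \<in> tyset bool_ty" and vfalse_in: "vfalse \<in> tyset bool_ty"
  by (auto simp: vtrue_def vfalse_def bool_ty_def)

lemma congr:
  assumes "ctx_typed \<Gamma> A C \<Delta> B"
    and H: "\<forall>\<gamma>\<in>envs \<Gamma>. \<forall>a\<in>tyset A. den s \<gamma> a = den t \<gamma> a"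
  shows "\<delta> \<in> envs \<Delta> \<Longrightarrow> b \<in> tyset B \<Longrightarrow> den (plug C s) \<delta> b = den (plug C t) \<delta> b"
  using assms
proof (induction arbitrary: \<delta> b rule: ctx_typed.induct)
  case (C_Hole \<Gamma> A)
  then show ?case by simp
next
  case (C_PairL \<Gamma> A C \<Delta> B1 t B2)
  then show ?case by auto
next
  case (C_PairR \<Delta> s B1 \<Gamma> A C B2)
  then show ?case by auto
next
  case (C_Fst \<Gamma> A C \<Delta> B1 B2)
  then show ?case by (auto intro!: sum.cong)
next
  case (C_Snd \<Gamma> A C \<Delta> B1 B2)
  then show ?case by (auto intro!: sum.cong)
next
  case (C_Prim B1 B2 f \<Gamma> A C \<Delta>)
  then show ?case by (auto intro!: sum.cong)
next
  case (C_LetL \<Gamma> A C \<Delta> B1 t B2)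
  then show ?case by (auto intro!: sum.cong)
next
  case (C_LetR \<Delta> s B1 \<Gamma> A C B2)
  then show ?case by (auto intro!: sum.cong simp: envs_Cons)
next
  case (C_If1 \<Gamma> A C \<Delta> t2 B t3)
  then show ?case using vtrue_in vfalse_in by auto
next
  case (C_If2 \<Delta> t1 \<Gamma> A C B t3)
  then show ?case by auto
next
  case (C_If3 \<Delta> t1 t2 \<Gamma> A C B)
  then show ?case by auto
qed

lemma sum_ind:
  assumes "finite S" "v \<in> S"
  shows "(\<Sum>a\<in>S. (if a = v then 1 else 0) * g a) = (g v :: real)"
proof -
  have "(\<Sum>a\<in>S. (if a = v then 1 else 0) * g a) = (\<Sum>a\<in>S. if a = v then g a else 0)"
    by (rule sum.cong) auto
  then show ?thesis using assms by simp
qed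

lemma sum_ind2:
  assumes "finite S" "v \<in> S"
  shows "(\<Sum>a\<in>S. (if a = v \<and> P then 1 else 0) * g a) = (if P then g v else (0::real))"
  using sum_ind[OF assms, of g] by auto

definition cv :: "ty \<Rightarrow> val \<Rightarrow> tm" where
  "cv B v = Prim Unit B (\<lambda>_ b. if b = v then 1 else 0) UnitT"

lemma cv_typed: "typed \<Delta> (cv B v) B"
proof -
  have "subkernel Unit B (\<lambda>_ b. if b = v then 1 else 0)"
    unfolding subkernel_def
  proof (intro ballI conjI)
    show "(\<Sum>b\<in>tyset B. if b = v then 1 else 0) \<le> (1::real)"
      by (cases "v \<in> tyset B") (auto simp: sum.delta)
  qed auto
  then show ?thesis unfolding cv_def by (intro T_Prim T_Unit)
qed

lemma cv_den: "den (cv B v) \<delta> b = (if b = v then 1 else 0)"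
  by (simp add: cv_def)

fun close :: "ty list \<Rightarrow> val list \<Rightarrow> tm \<Rightarrow> tm" where
  "close (A # \<Gamma>) (v # \<gamma>) s = close \<Gamma> \<gamma> (Let A (cv A v) s)"
| "close _ _ s = s"

fun closeC :: "ty list \<Rightarrow> val list \<Rightarrow> ctx \<Rightarrow> ctx" where
  "closeC (A # \<Gamma>) (v # \<gamma>) C = closeC \<Gamma> \<gamma> (CLetR A (cv A v) C)"
| "closeC _ _ C = C"

lemma plug_closeC: "plug (closeC \<Gamma> \<gamma> C) s = close \<Gamma> \<gamma> (plug C s)"
  by (induction \<Gamma> \<gamma> C rule: closeC.induct) auto

lemma den_close:
  "list_all2 (\<lambda>v A. v \<in> tyset A) \<gamma> \<Gamma> \<Longrightarrow> den (close \<Gamma> \<gamma> s) \<delta> b = den s (\<gamma> @ \<delta>) b"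
proof (induction \<gamma> \<Gamma> arbitrary: s rule: list_all2_induct)
  case Nil
  then show ?case by simp
next
  case (Cons v \<gamma> A \<Gamma>)
  have "den (Let A (cv A v) s) (\<gamma> @ \<delta>) b = den s (v # \<gamma> @ \<delta>) b"
    using Cons(1) by (simp add: cv_den sum_ind)
  then show ?case using Cons by simp
qed

lemma closeC_typed:
  "list_all2 (\<lambda>v A. v \<in> tyset A) \<gamma> \<Gamma> \<Longrightarrow> ctx_typed \<Gamma>0 A0 C (\<Gamma> @ \<Delta>) B \<Longrightarrow>
   ctx_typed \<Gamma>0 A0 (closeC \<Gamma> \<gamma> C) \<Delta> B"
proof (induction \<gamma> \<Gamma> arbitrary: C rule: list_all2_induct)
  case Nil
  then show ?case by simp
next
  case (Cons v \<gamma> A \<Gamma>)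
  have "ctx_typed \<Gamma>0 A0 (CLetR A (cv A v) C) (\<Gamma> @ \<Delta>) B"
    using Cons(4) by (intro C_LetR cv_typed) simp
  then show ?case using Cons by simp
qed

theorem proposition6p12:
  assumes "typed \<Gamma> s A" and "typed \<Gamma> t A"
  shows "branch_equiv \<Gamma> A s t \<longleftrightarrow>
         (\<forall>\<gamma>\<in>envs \<Gamma>. \<forall>a\<in>tyset A. den s \<gamma> a = den t \<gamma> a)"
proof
  assume R: "\<forall>\<gamma>\<in>envs \<Gamma>. \<forall>a\<in>tyset A. den s \<gamma> a = den t \<gamma> a"
  show "branch_equiv \<Gamma> A s t"
    unfolding branch_equiv_def obs_equiv_def
  proof (intro allI impI ballI)
    fix C B b assume C: "ctx_typed \<Gamma> A C [] B" and b: "b \<in> tyset B"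
    have e: "\<And>y. y \<in> tyset B \<Longrightarrow> den (plug C s) [] y = den (plug C t) [] y"
      using congr[OF C R] by (simp add: envs_def)
    then have "(\<Sum>y\<in>tyset B. den (plug C s) [] y) = (\<Sum>y\<in>tyset B. den (plug C t) [] y)"
      by (rule sum.cong[OF refl])
    then show "normalize_on (tyset B) (den (plug C s) []) b = normalize_on (tyset B) (den (plug C t) []) b"
      using e[OF b] by (simp add: normalize_on_def)
  qed
next
  assume BE: "branch_equiv \<Gamma> A s t"
  show "\<forall>\<gamma>\<in>envs \<Gamma>. \<forall>a\<in>tyset A. den s \<gamma> a = den t \<gamma> a"
  proof (intro ballI)
    fix \<gamma> a assume g: "\<gamma> \<in> envs \<Gamma>" and a: "a \<in> tyset A"
    have LA: "list_all2 (\<lambda>v A. v \<in> tyset A) \<gamma> \<Gamma>" using g by (simp add: envs_def)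
    define f where "f = (\<lambda>x b. if x = a \<and> b = vtrue then 1 else (0::real))"
    define coin where "coin = Prim Unit bool_ty (\<lambda>_ _. 1/2) UnitT"
    define C where "C = CIf2 coin (CPrim A bool_ty f (closeC \<Gamma> \<gamma> Hole)) (cv bool_ty vfalse)"
    have tf: "vtrue \<noteq> vfalse" by (simp add: vtrue_def vfalse_def)
    have bs: "tyset bool_ty = {vfalse, vtrue}"
      by (auto simp: bool_ty_def vtrue_def vfalse_def)
    have sk: "subkernel A bool_ty f"
      unfolding subkernel_def f_def bs using tf
      by auto
    have skc: "subkernel Unit bool_ty (\<lambda>_ _. 1/2)"
      unfolding subkernel_def bs using tf by simp
    have ct: "ctx_typed \<Gamma> A C [] bool_ty"
      unfolding C_def coin_def
      apply (rule C_If2)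
        apply (rule T_Prim[OF skc T_Unit])
       apply (rule C_Prim[OF sk])
       apply (rule closeC_typed[OF LA])
       apply (simp add: C_Hole)
      apply (rule cv_typed)
      done
    have den_coin: "\<And>b. den coin [] b = 1/2" by (simp add: coin_def)
    have D: "\<And>u b. den (plug C u) [] b =
        (if b = vtrue then den u \<gamma> a / 2 else 0) + (if b = vfalse then 1/2 else 0)"
    proof -
      fix u b
      have "den (Prim A bool_ty f (close \<Gamma> \<gamma> u)) [] b = (if b = vtrue then den u \<gamma> a else 0)"
        using a LA by (simp add: den_close f_def sum_ind2)
      then show "den (plug C u) [] b =
        (if b = vtrue then den u \<gamma> a / 2 else 0) + (if b = vfalse then 1/2 else 0)"
        by (simp add: C_def plug_closeC den_coin cv_den)
    qed
    have Z: "\<And>u. (\<Sum>y\<in>tyset bool_ty. den (plug C u) [] y) = (den u \<gamma> a + 1) / 2"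
      using tf by (simp add: bs D)
    have "obs_equiv bool_ty (plug C s) (plug C t)" using BE ct unfolding branch_equiv_def by blast
    then have E: "normalize_on (tyset bool_ty) (den (plug C s) []) vfalse =
                  normalize_on (tyset bool_ty) (den (plug C t) []) vfalse"
      unfolding obs_equiv_def using vfalse_in by blast
    have N: "\<And>u. normalize_on (tyset bool_ty) (den (plug C u) []) vfalse =
               (if den u \<gamma> a + 1 \<noteq> 0 then 1 / (den u \<gamma> a + 1) else 0)"
      unfolding normalize_on_def Let_def Z using tf
      by (auto simp: D divide_simps)
    show "den s \<gamma> a = den t \<gamma> a"
      using E unfolding N by (auto split: if_splits simp: divide_simps)
  qed
qed

end
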